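(* Let $\mathcal{X}:f(x,y,z)=0$ be a real surface of revolution with axis the $x$-axis, $f\in\mathbb{R}[x,y,z]$ absolutely irreducible, with profile curve $p(x,y)=f(x,y,0)=\sum_i p_i(x)y^{2i}$, and let $\mathcal{P}^2:\sum_i p_i(x)y^i=0$. Suppose $\mathcal{P}^2$ is rational and let $t\mapsto\big(p(t)/q(t),\,r(t)/q(t)\big)$, $p,q,r\in\mathbb{R}[t]$, be a proper parameterization of $\mathcal{P}^2$. Put $g=\gcd(r,q)$, $\tilde r=r/g$, $\tilde q=q/g$, $\tilde p = p/g$, and write $\tilde r\,\tilde q=h\,d^2$ with $h,d\in\mathbb{R}[t]$ and $h$ square-free (so $h=\hat r\hat q$ with $\hat r,\hat q$ the square-free parts of $\tilde r,\tilde q$, $\gcd(\hat r,\hat q)=1$). Then $\mathcal{X}$ is birationally equivalent to the tubular surface $$\mathcal{T}:\ y^2+z^2-h(x)=0,$$ and a birational map $\tau:\mathcal{T}\dashrightarrow\mathcal{X}$ is given by $$\tau(x,y,z)=\Big(\frac{\tilde p(x)}{\tilde q(x)},\ \frac{d(x)\,y}{\tilde q(x)},\ \frac{d(x)\,z}{\tilde q(x)}\Big).$$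
   Context: A surface of revolution (SOR): rotate an algebraic space curve $\mathcal{G}$ (distinct from the line $\mathcal{A}$ and not a line perpendicular to $\mathcal{A}$) about a line $\mathcal{A}\subset\mathbb{R}^3$. Absolutely irreducible means not a product of two non-constant polynomials in $\mathbb{C}[x,y,z]$. A parameterization is proper if it has a rational inverse. A tubular surface is a surface with equation $A(x)y^2+B(x)z^2+C(x)=0$. *)

theory Defs
  imports Complex_Main "HOL-Computational_Algebra.Computational_Algebra" "HOL-Computational_Algebra.Field_as_Ring"
begin

(* Trivariate polynomials in x, y, z are represented as nested univariate polynomials
   ('a poly poly poly = ((R[x])[y])[z]).  The innermost variable is x, then y, the outermost z. *)

definition eval3 :: "'a::comm_semiring_0 poly poly poly \<Rightarrow> 'a \<Rightarrow> 'a \<Rightarrow> 'a \<Rightarrow> 'a" where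
  "eval3 F x y z = poly (poly (poly F [:[:z:]:]) [:y:]) x"

definition eval2 :: "'a::comm_semiring_0 poly poly \<Rightarrow> 'a \<Rightarrow> 'a \<Rightarrow> 'a" where
  "eval2 F x y = poly (poly F [:y:]) x"

definition cpoly3 :: "real poly poly poly \<Rightarrow> complex poly poly poly" where
  "cpoly3 F = map_poly (map_poly (map_poly complex_of_real)) F"

definition evalC :: "real poly poly poly \<Rightarrow> complex \<times> complex \<times> complex \<Rightarrow> complex" where
  "evalC F P = (case P of (x, y, z) \<Rightarrow> eval3 (cpoly3 F) x y z)"

definition zero_set :: "real poly poly poly \<Rightarrow> (complex \<times> complex \<times> complex) set" where
  "zero_set F = {P. evalC F P = 0}"

definition absolutely_irreducible :: "real poly poly poly \<Rightarrow> bool" where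
  "absolutely_irreducible F \<longleftrightarrow> irreducible (cpoly3 F)"

(* f defines a surface of revolution with axis the x-axis: f is invariant under all rotations
   about the x-axis, and the surface is not a (union of) plane(s) perpendicular to the axis,
   i.e. f genuinely depends on (y,z)  (the generating curve is not a line perpendicular to A). *)
definition surface_of_revolution_x_axis :: "real poly poly poly \<Rightarrow> bool" where
  "surface_of_revolution_x_axis f \<longleftrightarrow>
     (\<forall>x y z \<theta>. eval3 f x (y * cos \<theta> - z * sin \<theta>) (y * sin \<theta> + z * cos \<theta>) = eval3 f x y z) \<and>
     (\<exists>x y z. eval3 f x y z \<noteq> eval3 f x 0 0)"

(* profile p(x,y) = f(x,y,0) = sum_i p_i(x) y^(2i); the curve P^2 : sum_i p_i(x) y^i = 0 *)
definition profile :: "real poly poly poly \<Rightarrow> real poly poly" where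
  "profile f = coeff f 0"

definition profile_half :: "real poly poly poly \<Rightarrow> real poly poly" where
  "profile_half f = (\<Sum>i\<le>degree (profile f). monom (coeff (profile f) (2 * i)) i)"

(* t \<mapsto> (p(t)/q(t), r(t)/q(t)) is a proper (i.e. rationally invertible) parameterization
   of the plane curve C(x,y) = 0 *)
definition proper_parametrization ::
  "real poly poly \<Rightarrow> real poly \<Rightarrow> real poly \<Rightarrow> real poly \<Rightarrow> bool" where
  "proper_parametrization C p q r \<longleftrightarrow>
     q \<noteq> 0 \<and>
     (\<forall>t. poly q t \<noteq> 0 \<longrightarrow> eval2 C (poly p t / poly q t) (poly r t / poly q t) = 0) \<and>
     (\<exists>A B :: real poly poly.
        (\<exists>t. poly q t \<noteq> 0 \<and> eval2 B (poly p t / poly q t) (poly r t / poly q t) \<noteq> 0) \<and>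
        (\<forall>t. poly q t \<noteq> 0 \<and> eval2 B (poly p t / poly q t) (poly r t / poly q t) \<noteq> 0 \<longrightarrow>
             eval2 A (poly p t / poly q t) (poly r t / poly q t) /
             eval2 B (poly p t / poly q t) (poly r t / poly q t) = t))"

(* rational maps C^3 --> C^3 with real coefficients: (N1, N2, N3, Den) *)
type_synonym ratmap3 =
  "real poly poly poly \<times> real poly poly poly \<times> real poly poly poly \<times> real poly poly poly"

definition rm_defined :: "ratmap3 \<Rightarrow> complex \<times> complex \<times> complex \<Rightarrow> bool" where
  "rm_defined R P = (case R of (N1, N2, N3, Dn) \<Rightarrow> evalC Dn P \<noteq> 0)"

definition rm_eval :: "ratmap3 \<Rightarrow> complex \<times> complex \<times> complex \<Rightarrow> complex \<times> complex \<times> complex" where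
  "rm_eval R P = (case R of (N1, N2, N3, Dn) \<Rightarrow>
      (evalC N1 P / evalC Dn P, evalC N2 P / evalC Dn P, evalC N3 P / evalC Dn P))"

(* "holds on a nonempty Zariski-open subset of V" is expressed by a polynomial D not vanishing
   identically on V.  phi : V --> W is birational if it agrees with a rational map on a nonempty
   Zariski open subset of V, and there is a rational map psi : W --> V such that psi o phi = id
   on a nonempty Zariski open subset of V and phi o psi = id on a nonempty Zariski open subset of W. *)
definition birational_map ::
  "(complex \<times> complex \<times> complex) set \<Rightarrow> (complex \<times> complex \<times> complex) set \<Rightarrow>
   (complex \<times> complex \<times> complex \<Rightarrow> complex \<times> complex \<times> complex) \<Rightarrow> bool" where
  "birational_map V W \<phi> \<longleftrightarrow>
     (\<exists>R\<phi> R\<psi> :: ratmap3. \<exists>D E :: real poly poly poly.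
        (\<exists>P\<in>V. evalC D P \<noteq> 0) \<and> (\<exists>Q\<in>W. evalC E Q \<noteq> 0) \<and>
        (\<forall>P\<in>V. evalC D P \<noteq> 0 \<longrightarrow>
            rm_defined R\<phi> P \<and> \<phi> P = rm_eval R\<phi> P \<and> \<phi> P \<in> W \<and>
            rm_defined R\<psi> (\<phi> P) \<and> rm_eval R\<psi> (\<phi> P) = P) \<and>
        (\<forall>Q\<in>W. evalC E Q \<noteq> 0 \<longrightarrow>
            rm_defined R\<psi> Q \<and> rm_eval R\<psi> Q \<in> V \<and>
            rm_defined R\<phi> (rm_eval R\<psi> Q) \<and> \<phi> (rm_eval R\<psi> Q) = Q))"

definition birationally_equivalent ::
  "(complex \<times> complex \<times> complex) set \<Rightarrow> (complex \<times> complex \<times> complex) set \<Rightarrow> bool" where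
  "birationally_equivalent V W \<longleftrightarrow> (\<exists>\<phi>. birational_map V W \<phi>)"

definition tube :: "real poly \<Rightarrow> (complex \<times> complex \<times> complex) set" where
  "tube h = {(x, y, z). y^2 + z^2 - poly (map_poly complex_of_real h) x = 0}"

end

theory Submission
  imports Defs
begin


abbreviation cp1 :: "real poly \<Rightarrow> complex poly" where "cp1 \<equiv> map_poly complex_of_real"
abbreviation cp2 :: "real poly poly \<Rightarrow> complex poly poly" where "cp2 \<equiv> map_poly cp1"

lemma mp_add: assumes "f 0 = 0" "\<And>a b. f (a + b) = f a + f b"
  shows "map_poly f (p + q) = map_poly f p + map_poly f q"
  by (rule poly_eqI) (simp add: coeff_map_poly assms)

lemma mp_mult: fixes f :: "'a::comm_ring_1 \<Rightarrow> 'b::comm_ring_1"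
  assumes "f 0 = 0" "\<And>a b. f (a + b) = f a + f b" "\<And>a b. f (a * b) = f a * f b"
  shows "map_poly f (p * q) = map_poly f p * map_poly f q"
proof (induction p)
  case 0 show ?case by simp
next
  case (pCons a p)
  show ?case using pCons
    by (simp add: mp_add map_poly_smult assms map_poly_pCons)
qed

lemma cp1_add: "cp1 (p + q) = cp1 p + cp1 q" by (rule mp_add) auto
lemma cp1_mult: "cp1 (p * q) = cp1 p * cp1 q" by (rule mp_mult) auto
lemma cp2_add: "cp2 (p + q) = cp2 p + cp2 q" by (rule mp_add) (auto simp: cp1_add)
lemma cp2_mult: "cp2 (p * q) = cp2 p * cp2 q" by (rule mp_mult) (auto simp: cp1_add cp1_mult)
lemma cp3_add: "cpoly3 (p + q) = cpoly3 p + cpoly3 q" unfolding cpoly3_def by (rule mp_add) (auto simp: cp2_add)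
lemma cp3_mult: "cpoly3 (p * q) = cpoly3 p * cpoly3 q" unfolding cpoly3_def by (rule mp_mult) (auto simp: cp2_add cp2_mult)

lemma mp_poly: assumes "f 0 = 0" "\<And>a b. f (a + b) = f a + f b" "\<And>a b. f (a * b) = f a * f b"
  shows "f (poly p x) = poly (map_poly f p) (f x)"
  by (induction p) (auto simp: map_poly_pCons assms)

lemma poly_cp1_real: "poly (cp1 c) (of_real t) = of_real (poly c t)"
  by (induction c) (auto simp: map_poly_pCons)

lemma eval2_cp2_real: "eval2 (cp2 G) (of_real a) (of_real b) = of_real (eval2 G a b)"
  unfolding eval2_def
  by (induction G) (auto simp: map_poly_pCons poly_cp1_real)

lemma eval2_pCons: "eval2 (pCons c G) a b = poly c a + b * eval2 G a b"
  by (simp add: eval2_def)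

lemma eval2_cp2_pCons: "eval2 (cp2 (pCons c G)) a b = poly (cp1 c) a + b * eval2 (cp2 G) a b"
  by (simp add: eval2_def map_poly_pCons)

lemma eval2_add: "eval2 (F + G) a b = eval2 F a b + eval2 G a b" by (simp add: eval2_def)
lemma eval2_mult: "eval2 (F * G) a b = eval2 F a b * eval2 G a b" by (simp add: eval2_def)
lemma eval3_add: "eval3 (F + G) a b c = eval3 F a b c + eval3 G a b c" by (simp add: eval3_def)
lemma eval3_mult: "eval3 (F * G) a b c = eval3 F a b c * eval3 G a b c" by (simp add: eval3_def)
lemma eval3_minus: "eval3 (F - G) a b c = eval3 F a b c - eval3 G a b c" for F G :: "'a::comm_ring poly poly poly"
  by (simp add: eval3_def)
lemma eval2_minus: "eval2 (F - G) a b = eval2 F a b - eval2 G a b" for F G :: "'a::comm_ring poly poly" by (simp add: eval2_def)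

lemma evalC_real: "evalC N (of_real x, of_real y, of_real z) = of_real (eval3 N x y z)"
proof -
  have "poly (poly (map_poly cp2 N) [:[:of_real z:]:]) [:of_real y:]
        = cp1 (poly (poly N [:[:z:]:]) [:y:])"
  proof -
    have a: "cp2 (poly N [:[:z:]:]) = poly (map_poly cp2 N) (cp2 [:[:z:]:])"
      by (rule mp_poly) (auto simp: cp2_add cp2_mult)
    have b: "cp1 (poly (poly N [:[:z:]:]) [:y:]) = poly (cp2 (poly N [:[:z:]:])) (cp1 [:y:])"
      by (rule mp_poly) (auto simp: cp1_add cp1_mult)
    show ?thesis unfolding b a by (simp add: map_poly_pCons)
  qed
  then show ?thesis
    by (simp add: evalC_def eval3_def cpoly3_def poly_cp1_real)
qed

lemma eval2_swap: "eval2 Q x y = poly (map_poly (\<lambda>c. poly c x) Q) y"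
  by (induction Q) (auto simp: eval2_def map_poly_pCons)

lemma zero2: fixes Q :: "'a::{idom,ring_char_0} poly poly"
  assumes "\<forall>x y. eval2 Q x y = 0" shows "Q = 0"
proof -
  have "\<forall>x. map_poly (\<lambda>c. poly c x) Q = 0"
    using assms by (simp add: eval2_swap poly_all_0_iff_0[symmetric])
  then have "\<forall>k x. poly (coeff Q k) x = 0"
    by (metis coeff_0 coeff_map_poly poly_0)
  then have "\<forall>k. coeff Q k = 0" by (simp add: poly_all_0_iff_0[symmetric])
  then show ?thesis by (simp add: poly_eq_iff)
qed

lemma eval3_swap: "eval3 G x y z = poly (map_poly (\<lambda>c. eval2 c x y) G) z"
  by (induction G) (auto simp: eval3_def eval2_def map_poly_pCons)

lemma zero3: fixes G :: "'a::{idom,ring_char_0} poly poly poly"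
  assumes "\<forall>x y z. eval3 G x y z = 0" shows "G = 0"
proof -
  have "\<forall>x y. map_poly (\<lambda>c. eval2 c x y) G = 0"
    using assms by (simp add: eval3_swap poly_all_0_iff_0[symmetric])
  then have "\<forall>k x y. eval2 (coeff G k) x y = 0"
    by (metis coeff_0 coeff_map_poly eval2_def poly_0)
  then have "\<forall>k. coeff G k = 0" using zero2 by blast
  then show ?thesis by (simp add: poly_eq_iff)
qed

lemma eq3: fixes F G :: "'a::{idom,ring_char_0} poly poly poly"
  assumes "\<And>x y z. eval3 F x y z = eval3 G x y z" shows "F = G"
  using zero3[of "F - G"] assms by (simp add: eval3_minus)

lemma eq2: fixes F G :: "'a::{idom,ring_char_0} poly poly"
  assumes "\<And>x y. eval2 F x y = eval2 G x y" shows "F = G"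
  using zero2[of "F - G"] assms by (simp add: eval2_minus)

definition W3 :: "'a::comm_ring_1 poly poly poly" where "W3 = [: [:0,0,1:], 0, 1:]"
definition comp3 :: "'a::comm_ring_1 poly poly \<Rightarrow> 'a poly poly poly" where
  "comp3 A = poly (map_poly (\<lambda>c. [:[:c:]:]) A) W3"

lemma eval3_comp3: "eval3 (comp3 A) x y z = eval2 A x (y^2 + z^2)"
  unfolding comp3_def
  by (induction A) (auto simp: eval3_def eval2_def W3_def map_poly_pCons power2_eq_square algebra_simps)



lemma poly_sum_bound: fixes x :: "'a::comm_semiring_1" assumes "degree p \<le> M"
  shows "poly p x = (\<Sum>j\<le>M. coeff p j * x ^ j)"
proof -
  have "poly p x = (\<Sum>j\<le>degree p. coeff p j * x ^ j)" by (rule poly_altdef)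
  also have "\<dots> = (\<Sum>j\<le>M. coeff p j * x ^ j)"
    by (rule sum.mono_neutral_left) (use assms in \<open>auto simp: coeff_eq_0\<close>)
  finally show ?thesis .
qed

lemma even_sum: fixes a :: "nat \<Rightarrow> 'a::comm_ring_1"
  assumes "\<And>j. odd j \<Longrightarrow> a j = 0" "\<And>j. j > n \<Longrightarrow> a j = 0"
  shows "(\<Sum>j\<le>n. a j * r^j) = (\<Sum>i\<le>n. a (2*i) * (r^2)^i)"
proof -
  have "(\<Sum>j\<le>n. a j * r^j) = (\<Sum>j\<le>2*n. a j * r^j)"
    by (rule sum.mono_neutral_left) (auto simp: assms)
  also have "\<dots> = (\<Sum>j\<in>(\<lambda>i. 2*i) ` {..n}. a j * r^j)"
  proof (rule sum.mono_neutral_right)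
    show "\<forall>i\<in>{..2 * n} - (\<lambda>i. 2 * i) ` {..n}. a i * r ^ i = 0"
    proof
      fix i assume i: "i \<in> {..2 * n} - (\<lambda>i. 2 * i) ` {..n}"
      have "odd i"
      proof
        assume "even i" then obtain k where "i = 2*k" by blast
        with i show False by auto
      qed
      then show "a i * r ^ i = 0" by (simp add: assms)
    qed
  qed auto
  also have "\<dots> = (\<Sum>i\<le>n. a (2*i) * (r^2)^i)"
    by (subst sum.reindex) (auto simp: inj_on_def power_mult)
  finally show ?thesis .
qed

lemma eval3_at0: "eval3 f x r 0 = eval2 (profile f) x r"
  by (simp add: eval3_def eval2_def profile_def poly_0_coeff_0[symmetric])

lemma sor_radial:
  assumes sor: "surface_of_revolution_x_axis f"
  shows "eval3 f x y z = eval2 (profile f) x (sqrt (y^2+z^2))"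
proof (cases "y^2+z^2 = 0")
  case True
  then have "y = 0" "z = 0" by (auto simp: add_nonneg_eq_0_iff)
  then show ?thesis by (simp add: eval3_at0)
next
  case False
  define \<rho> where "\<rho> = sqrt (y^2+z^2)"
  have "y^2+z^2 \<ge> 0" by simp
  then have "y^2+z^2 > 0" using False by linarith
  then have rp: "\<rho> > 0" by (simp add: \<rho>_def)
  have "(y/\<rho>)^2 + (z/\<rho>)^2 = 1" using rp False
    by (simp add: \<rho>_def power_divide add_divide_distrib[symmetric] add_nonneg_nonneg)
  then obtain t where t: "y/\<rho> = cos t" "z/\<rho> = sin t"
    using sincos_total_2pi by metis
  have "eval3 f x (\<rho> * cos t - 0 * sin t) (\<rho> * sin t + 0 * cos t) = eval3 f x \<rho> 0"
    using sor unfolding surface_of_revolution_x_axis_def by blast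
  moreover have "\<rho> * cos t = y" "\<rho> * sin t = z" using t rp by (auto simp: field_simps)
  ultimately show ?thesis by (simp add: eval3_at0 \<rho>_def)
qed

lemma profile_odd:
  assumes sor: "surface_of_revolution_x_axis f" and "odd j"
  shows "coeff (profile f) j = 0"
proof -
  have "\<forall>x. poly (coeff (profile f) j) x = 0"
  proof
    fix x
    define P where "P = map_poly (\<lambda>c. poly c x) (profile f)"
    have ev: "poly P r = eval2 (profile f) x r" for r by (simp add: P_def eval2_swap)
    have "eval3 f x (r * cos pi - 0 * sin pi) (r * sin pi + 0 * cos pi) = eval3 f x r 0" for r
      using sor unfolding surface_of_revolution_x_axis_def by blast
    then have "poly P (-r) = poly P r" for r by (simp add: ev eval3_at0[symmetric])
    then have "poly (pcompose P [:0,-1:]) = poly P" by (auto simp: poly_pcompose)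
    then have "pcompose P [:0,-1:] = P" by (simp add: poly_eq_poly_eq_iff)
    then have "coeff (pcompose P [:0,-1:]) j = coeff P j" by simp
    then have "coeff P j = 0" using \<open>odd j\<close> by (simp add: coeff_pcompose_linear)
    then show "poly (coeff (profile f) j) x = 0" by (simp add: P_def coeff_map_poly)
  qed
  then show ?thesis by (simp add: poly_all_0_iff_0[symmetric])
qed

lemma eval2_profile_half: "eval2 (profile_half f) x w =
   (\<Sum>i\<le>degree (profile f). poly (coeff (profile f) (2*i)) x * w^i)"
  by (simp add: eval2_def profile_half_def poly_sum poly_monom)

lemma real_identity:
  assumes sor: "surface_of_revolution_x_axis f"
  shows "eval3 f x y z = eval2 (profile_half f) x (y^2+z^2)"
proof -
  define n where "n = degree (profile f)"
  define P where "P = map_poly (\<lambda>c. poly c x) (profile f)"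
  have dP: "degree P \<le> n" unfolding P_def n_def by (rule map_poly_degree_leq)
  have "eval3 f x y z = poly P (sqrt (y^2+z^2))"
    by (simp add: sor_radial[OF sor] P_def eval2_swap)
  also have "\<dots> = (\<Sum>j\<le>n. coeff P j * (sqrt (y^2+z^2))^j)"
    by (rule poly_sum_bound[OF dP])
  also have "\<dots> = (\<Sum>i\<le>n. coeff P (2*i) * ((sqrt (y^2+z^2))^2)^i)"
  proof (rule even_sum)
    fix j :: nat assume "odd j" then show "coeff P j = 0"
      by (simp add: P_def coeff_map_poly profile_odd[OF sor])
  next
    fix j :: nat assume "j > n" then show "coeff P j = 0" using dP by (intro coeff_eq_0) simp
  qed
  also have "\<dots> = eval2 (profile_half f) x (y^2+z^2)"
    by (simp add: eval2_profile_half n_def P_def coeff_map_poly add_nonneg_nonneg)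
  finally show ?thesis .
qed

lemma f_comp3: assumes sor: "surface_of_revolution_x_axis f"
  shows "f = comp3 (profile_half f)"
  by (rule eq3) (simp add: eval3_comp3 real_identity[OF sor])

lemma cpoly3_comp3: "cpoly3 (comp3 A) = comp3 (cp2 A)"
proof -
  have h: "map_poly cp2 (poly P v) = poly (map_poly (map_poly cp2) P) (map_poly cp2 v)"
    for P :: "real poly poly poly poly" and v
    by (rule mp_poly) (auto simp: cp2_add cp2_mult intro: mp_add mp_mult)
  have "map_poly (map_poly cp2) (map_poly (\<lambda>c. [:[:c:]:]) A) = map_poly (\<lambda>c. [:[:c:]:]) (cp2 A)"
    by (simp add: map_poly_map_poly o_def map_poly_pCons)
  moreover have "map_poly cp2 W3 = W3" by (simp add: W3_def map_poly_pCons)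
  ultimately show ?thesis unfolding cpoly3_def comp3_def h by simp
qed

lemma complex_identity:
  assumes sor: "surface_of_revolution_x_axis f"
  shows "evalC f (x, y, z) = eval2 (cp2 (profile_half f)) x (y^2+z^2)"
proof -
  have "cpoly3 f = comp3 (cp2 (profile_half f))"
    using f_comp3[OF sor] cpoly3_comp3 by metis
  then show ?thesis by (simp add: evalC_def eval3_comp3)
qed

lemma degree_pos:
  assumes sor: "surface_of_revolution_x_axis f"
  shows "degree (profile_half f) > 0"
proof (rule ccontr)
  assume "\<not> ?thesis"
  then obtain c where c: "profile_half f = [:c:]" by (metis degree_eq_zeroE neq0_conv)
  from sor obtain x y z where "eval3 f x y z \<noteq> eval3 f x 0 0"
    unfolding surface_of_revolution_x_axis_def by blast
  then show False by (simp add: real_identity[OF sor] c eval2_def)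
qed



lemma comp3_mult: "comp3 (A * B) = comp3 A * comp3 B" for A B :: "'a::{idom,ring_char_0} poly poly"
  by (rule eq3) (simp add: eval3_comp3 eval3_mult eval2_mult)

lemma comp3_one: "comp3 (1 :: 'a::{idom,ring_char_0} poly poly) = 1"
  by (rule eq3) (simp only: eval3_comp3, simp add: eval2_def eval3_def)

lemma comp3_unit: fixes A :: "complex poly poly"
  assumes "is_unit (comp3 A)" shows "is_unit A"
proof -
  from assms obtain c1 where c1: "comp3 A = [:c1:]" "is_unit c1" by (auto simp: is_unit_poly_iff)
  from c1(2) obtain c2 where c2: "c1 = [:c2:]" "is_unit c2" by (auto simp: is_unit_poly_iff)
  from c2(2) obtain c where c: "c2 = [:c:]" "is_unit c" by (auto simp: is_unit_poly_iff)
  have "eval2 A x w = eval2 [:[:c:]:] x w" for x w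
  proof -
    have "eval2 A x w = eval3 (comp3 A) x (csqrt w) 0" by (simp add: eval3_comp3)
    also have "\<dots> = c" by (simp add: c1 c2 c eval3_def)
    finally show ?thesis by (simp add: eval2_def)
  qed
  then have "A = [:[:c:]:]" by (rule eq2)
  then show ?thesis using c(2) by (simp add: is_unit_poly_iff)
qed

lemma irr_FC:
  assumes sor: "surface_of_revolution_x_axis f" and irr: "absolutely_irreducible f"
  shows "irreducible (cp2 (profile_half f))"
proof -
  define FC where "FC = cp2 (profile_half f)"
  have eq: "cpoly3 f = comp3 FC"
    unfolding FC_def using f_comp3[OF sor] cpoly3_comp3 by metis
  have ir: "irreducible (comp3 FC)" using irr eq by (simp add: absolutely_irreducible_def)
  show ?thesis unfolding FC_def[symmetric]
  proof (rule irreducibleI)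
    show "FC \<noteq> 0"
    proof
      assume "FC = 0"
      then have "comp3 FC = 0" by (simp add: comp3_def)
      with ir show False by simp
    qed
  next
    show "\<not> is_unit FC"
    proof
      assume "is_unit FC"
      then obtain v where "1 = FC * v" by (auto elim: dvdE)
      then have "1 = comp3 FC * comp3 v" by (metis comp3_mult comp3_one)
      then have "is_unit (comp3 FC)" by (metis dvd_triv_left)
      with ir show False by (simp add: irreducible_def)
    qed
  next
    fix a b assume "FC = a * b"
    then have "comp3 FC = comp3 a * comp3 b" by (simp add: comp3_mult)
    with ir have "is_unit (comp3 a) \<or> is_unit (comp3 b)" by (rule irreducibleD)
    then show "is_unit a \<or> is_unit b" using comp3_unit by blast
  qed
qed

lemma clear_denom:
  fixes u :: "complex poly fract poly"
  obtains U b where "b \<noteq> 0" "smult (to_fract b) u = fract_poly U"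
proof -
  from content_decompose_fract[of u] obtain cu U' where
    u: "u = smult cu (fract_poly U')" by metis
  define a where "a = fst (quot_of_fract cu)"
  define b where "b = snd (quot_of_fract cu)"
  have b0: "b \<noteq> 0" by (simp add: b_def)
  have cu: "cu = to_fract a / to_fract b"
    by (metis Fract_conv_to_fract Fract_quot_of_fract a_def b_def)
  have "smult (to_fract b) u = smult (to_fract b * cu) (fract_poly U')" by (simp add: u)
  also have "to_fract b * cu = to_fract a" using b0 by (simp add: cu)
  also have "smult (to_fract a) (fract_poly U') = fract_poly (smult a U')" by simp
  finally show ?thesis using that b0 by blast
qed

lemma vanish_line:
  fixes F :: "complex poly poly"
  assumes irr: "irreducible F" and deg: "degree F > 0"
    and inf: "infinite {b. eval2 F a0 b = 0}"
  shows False
proof -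
  define P where "P = map_poly (\<lambda>c. poly c a0) F"
  have "{b. eval2 F a0 b = 0} = {b. poly P b = 0}" by (simp add: P_def eval2_swap)
  then have "P = 0" using inf poly_roots_finite by fastforce
  then have z: "poly (coeff F k) a0 = 0" for k
    by (metis P_def coeff_0 coeff_map_poly poly_0)
  define l where "l = [:-a0, 1:]"
  define F' where "F' = map_poly (\<lambda>c. c div l) F"
  have "F = smult l F'"
  proof (rule poly_eqI)
    fix k
    have "l dvd coeff F k" using z by (simp add: l_def poly_eq_0_iff_dvd)
    then show "coeff F k = coeff (smult l F') k"
      by (simp add: F'_def coeff_map_poly)
  qed
  then have "F = [:l:] * F'" by simp
  with irr have "is_unit [:l:] \<or> is_unit F'" by (rule irreducibleD)
  moreover have "\<not> is_unit [:l:]" by (auto simp: is_unit_poly_iff l_def)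
  moreover have "\<not> is_unit F'"
  proof
    assume "is_unit F'"
    then have "degree F' = 0" by (auto simp: is_unit_poly_iff)
    with \<open>F = smult l F'\<close> have "degree F = 0" by simp
    with deg show False by simp
  qed
  ultimately show False by blast
qed

lemma field_bezout:
  fixes a b :: "'k::field poly"
  assumes irr: "irreducible a" and nd: "\<not> a dvd b"
  shows "\<exists>u v. u * a + v * b = 1"
proof -
  define I where "I = {p. \<exists>u v. p = u * a + v * b}"
  have "a = 1 * a + 0 * b" by simp
  then have aI: "a \<in> I" unfolding I_def by blast
  have a0: "a \<noteq> 0" using irr by auto
  obtain h where h: "h \<in> I \<and> h \<noteq> 0" and hmin: "\<And>p. p \<in> I \<and> p \<noteq> 0 \<Longrightarrow> degree h \<le> degree p"
    using ex_has_least_nat[of "\<lambda>p. p \<in> I \<and> p \<noteq> 0" a degree] aI a0 by blast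
  have dv: "h dvd p" if "p \<in> I" for p
  proof (rule ccontr)
    assume "\<not> h dvd p"
    then have m0: "p mod h \<noteq> 0" by (simp add: dvd_eq_mod_eq_0)
    from that h obtain u v u' v' where e: "p = u * a + v * b" "h = u' * a + v' * b" unfolding I_def by blast
    have "p mod h = (u - p div h * u') * a + (v - p div h * v') * b"
    proof -
      have "p mod h = p - p div h * h" by (simp add: minus_div_mult_eq_mod)
      also have "\<dots> = (u - p div h * u') * a + (v - p div h * v') * b"
        unfolding e(2) by (subst e(1)) (simp add: algebra_simps)
      finally show ?thesis .
    qed
    then have "p mod h \<in> I" unfolding I_def by blast
    then have "degree h \<le> degree (p mod h)" using hmin m0 by blast
    moreover have "degree (p mod h) < degree h" using degree_mod_less'[of h p] h m0 by blast
    ultimately show False by simp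
  qed
  have "b = 0 * a + 1 * b" by simp
  then have "b \<in> I" unfolding I_def by blast
  then have hb: "h dvd b" by (rule dv)
  from dv[OF aI] obtain k where k: "a = h * k" by (auto elim: dvdE)
  from irr k have "is_unit h \<or> is_unit k" by (rule irreducibleD)
  then show ?thesis
  proof
    assume "is_unit k"
    then obtain k' where "1 = k * k'" by (auto elim: dvdE)
    then have "h = a * k'" using k by (metis mult.assoc mult_1_right)
    then have "a dvd h" by simp
    with hb nd show ?thesis using dvd_trans by blast
  next
    assume "is_unit h"
    then obtain h' where h': "1 = h * h'" by (auto elim: dvdE)
    from h obtain u v where "h = u * a + v * b" unfolding I_def by blast
    then have "(h' * u) * a + (h' * v) * b = 1" using h' by (simp add: algebra_simps)
    then show ?thesis by blast
  qed
qed



lemma eval2_smult: "eval2 (smult c F) a b = poly c a * eval2 F a b"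
  by (simp add: eval2_def)

lemma curve:
  fixes F G :: "complex poly poly"
  assumes irr: "irreducible F" and deg: "degree F > 0" and inf: "infinite S"
    and van: "\<And>a b. (a, b) \<in> S \<Longrightarrow> eval2 F a b = 0 \<and> eval2 G a b = 0"
  shows "F dvd G"
proof (rule ccontr)
  assume nd: "\<not> F dvd G"
  have prim: "content F = 1" and irrf: "irreducible (fract_poly F)"
    using nonconst_poly_irreducible_iff[of F] deg irr by auto
  have "\<not> fract_poly F dvd fract_poly G" using nd prim fract_poly_dvdD by blast
  then obtain u v where uv: "u * fract_poly F + v * fract_poly G = 1"
    using field_bezout[OF irrf] by blast
  obtain U b1 where U: "b1 \<noteq> 0" "smult (to_fract b1) u = fract_poly U" using clear_denom by blast
  obtain V b2 where V: "b2 \<noteq> 0" "smult (to_fract b2) v = fract_poly V" using clear_denom by blast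
  have "fract_poly (smult b2 U * F + smult b1 V * G)
     = smult (to_fract b2) (fract_poly U) * fract_poly F + smult (to_fract b1) (fract_poly V) * fract_poly G"
    by simp
  also have "\<dots> = smult (to_fract b2) (smult (to_fract b1) u) * fract_poly F
       + smult (to_fract b1) (smult (to_fract b2) v) * fract_poly G"
    by (simp only: U V)
  also have "\<dots> = smult (to_fract (b1*b2)) (u * fract_poly F + v * fract_poly G)"
    by (simp only: smult_smult mult_smult_left smult_add_right to_fract_mult mult.commute[of "to_fract b2"])
  also have "\<dots> = fract_poly [:b1*b2:]" using uv by (simp add: map_poly_pCons)
  finally have "fract_poly (smult b2 U * F + smult b1 V * G) = fract_poly [:b1*b2:]" .
  then have rel: "smult b2 U * F + smult b1 V * G = [:b1*b2:]" by (simp only: fract_poly_eq_iff)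
  have c0: "b1 * b2 \<noteq> 0" using U V by simp
  have root: "poly (b1*b2) a = 0" if "(a, b) \<in> S" for a b
  proof -
    have "eval2 (smult b2 U * F + smult b1 V * G) a b = 0"
      using van[OF that] by (simp add: eval2_add eval2_mult eval2_smult del: mult_smult_left)
    then show ?thesis unfolding rel by (simp add: eval2_def)
  qed
  have fin: "finite {a. poly (b1*b2) a = 0}" using c0 by (rule poly_roots_finite)
  have "\<exists>a0. infinite {b. (a0, b) \<in> S}"
  proof (rule ccontr)
    assume "\<not> ?thesis"
    then have "finite (\<Union>a\<in>{a. poly (b1*b2) a = 0}. {a} \<times> {b. (a, b) \<in> S})" using fin by auto
    moreover have "S \<subseteq> (\<Union>a\<in>{a. poly (b1*b2) a = 0}. {a} \<times> {b. (a, b) \<in> S})"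
      using root by auto
    ultimately show False using inf finite_subset by blast
  qed
  then obtain a0 where "infinite {b. (a0, b) \<in> S}" by blast
  moreover have "{b. (a0, b) \<in> S} \<subseteq> {b. eval2 F a0 b = 0}" using van by auto
  ultimately have "infinite {b. eval2 F a0 b = 0}" using finite_subset by blast
  then show False using vanish_line[OF irr deg] by blast
qed



definition pf3 :: "(complex \<times> complex \<times> complex \<Rightarrow> complex) \<Rightarrow> bool" where
  "pf3 \<phi> \<longleftrightarrow> (\<exists>N. \<forall>P. \<phi> P = evalC N P)"

lemma pf3_const: "pf3 (\<lambda>P. of_real c)"
  unfolding pf3_def
  by (rule exI[of _ "[:[:[:c:]:]:]"]) (simp add: evalC_def cpoly3_def eval3_def map_poly_pCons split: prod.splits)

lemma pf3_x: "pf3 (\<lambda>P. fst P)"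
  unfolding pf3_def
  by (rule exI[of _ "[:[:[:0,1:]:]:]"]) (simp add: evalC_def cpoly3_def eval3_def map_poly_pCons split: prod.splits)

lemma pf3_y: "pf3 (\<lambda>P. fst (snd P))"
  unfolding pf3_def
  by (rule exI[of _ "[:[:0,1:]:]"]) (simp add: evalC_def cpoly3_def eval3_def map_poly_pCons split: prod.splits)

lemma pf3_z: "pf3 (\<lambda>P. snd (snd P))"
  unfolding pf3_def
  by (rule exI[of _ "[:0,1:]"]) (simp add: evalC_def cpoly3_def eval3_def map_poly_pCons split: prod.splits)

lemma pf3_add: assumes "pf3 f" "pf3 g" shows "pf3 (\<lambda>P. f P + g P)"
proof -
  from assms obtain N M where "\<forall>P. f P = evalC N P" "\<forall>P. g P = evalC M P" unfolding pf3_def by blast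
  then have "\<forall>P. f P + g P = evalC (N + M) P"
    by (auto simp: evalC_def cp3_add eval3_add split: prod.splits)
  then show ?thesis unfolding pf3_def by blast
qed

lemma pf3_mult: assumes "pf3 f" "pf3 g" shows "pf3 (\<lambda>P. f P * g P)"
proof -
  from assms obtain N M where "\<forall>P. f P = evalC N P" "\<forall>P. g P = evalC M P" unfolding pf3_def by blast
  then have "\<forall>P. f P * g P = evalC (N * M) P"
    by (auto simp: evalC_def cp3_mult eval3_mult split: prod.splits)
  then show ?thesis unfolding pf3_def by blast
qed

lemma pf3_diff: assumes "pf3 f" "pf3 g" shows "pf3 (\<lambda>P. f P - g P)"
proof -
  have "pf3 (\<lambda>P. f P + of_real (-1) * g P)" by (intro pf3_add pf3_mult pf3_const assms)
  then show ?thesis by simp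
qed

lemma pf3_power: "pf3 f \<Longrightarrow> pf3 (\<lambda>P. f P ^ n)"
proof (induction n)
  case 0 then show ?case using pf3_const[of 1] by simp
next
  case (Suc n) then show ?case using pf3_mult[of f "\<lambda>P. f P ^ n"] by simp
qed

lemma pf3_sum: "(\<And>i. i \<in> A \<Longrightarrow> pf3 (f i)) \<Longrightarrow> pf3 (\<lambda>P. \<Sum>i\<in>A. f i P)"
proof (induction A rule: infinite_finite_induct)
  case (infinite A) then show ?case using pf3_const[of 0] by simp
next
  case empty then show ?case using pf3_const[of 0] by simp
next
  case (insert x F) then show ?case using pf3_add[of "f x" "\<lambda>P. \<Sum>i\<in>F. f i P"] by simp
qed

lemma pf3_poly: "pf3 f \<Longrightarrow> pf3 (\<lambda>P. poly (cp1 c) (f P))"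
proof (induction c)
  case 0 then show ?case using pf3_const[of 0] by simp
next
  case (pCons a c)
  then have "pf3 (\<lambda>P. of_real a + f P * poly (cp1 c) (f P))"
    by (intro pf3_add pf3_mult pf3_const) auto
  then show ?case by (simp add: map_poly_pCons)
qed

lemma pf3_eval2: "pf3 f \<Longrightarrow> pf3 g \<Longrightarrow> pf3 (\<lambda>P. eval2 (cp2 G) (f P) (g P))"
proof (induction G)
  case 0 then show ?case using pf3_const[of 0] by (simp add: eval2_def)
next
  case (pCons a G)
  then have "pf3 (\<lambda>P. poly (cp1 a) (f P) + g P * eval2 (cp2 G) (f P) (g P))"
    by (intro pf3_add pf3_mult pf3_poly) auto
  then show ?case by (simp add: eval2_cp2_pCons)
qed


definition pf2 :: "(complex \<Rightarrow> complex \<Rightarrow> complex) \<Rightarrow> bool" where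
  "pf2 \<phi> \<longleftrightarrow> (\<exists>G::complex poly poly. \<forall>x w. \<phi> x w = eval2 G x w)"

lemma pf2_const: "pf2 (\<lambda>x w. c)"
  unfolding pf2_def by (rule exI[of _ "[:[:c:]:]"]) (simp add: eval2_def)

lemma pf2_x: "pf2 (\<lambda>x w. x)"
  unfolding pf2_def by (rule exI[of _ "[:[:0,1:]:]"]) (simp add: eval2_def)

lemma pf2_w: "pf2 (\<lambda>x w. w)"
  unfolding pf2_def by (rule exI[of _ "[:0,1:]"]) (simp add: eval2_def)

lemma pf2_add: assumes "pf2 f" "pf2 g" shows "pf2 (\<lambda>x w. f x w + g x w)"
proof -
  from assms obtain N M where "\<forall>x w. f x w = eval2 N x w" "\<forall>x w. g x w = eval2 M x w" unfolding pf2_def by blast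
  then have "\<forall>x w. f x w + g x w = eval2 (N + M) x w" by (simp add: eval2_add)
  then show ?thesis unfolding pf2_def by blast
qed

lemma pf2_mult: assumes "pf2 f" "pf2 g" shows "pf2 (\<lambda>x w. f x w * g x w)"
proof -
  from assms obtain N M where "\<forall>x w. f x w = eval2 N x w" "\<forall>x w. g x w = eval2 M x w" unfolding pf2_def by blast
  then have "\<forall>x w. f x w * g x w = eval2 (N * M) x w" by (simp add: eval2_mult)
  then show ?thesis unfolding pf2_def by blast
qed

lemma pf2_diff: assumes "pf2 f" "pf2 g" shows "pf2 (\<lambda>x w. f x w - g x w)"
proof -
  from assms obtain N M where "\<forall>x w. f x w = eval2 N x w" "\<forall>x w. g x w = eval2 M x w" unfolding pf2_def by blast
  then have "\<forall>x w. f x w - g x w = eval2 (N - M) x w" by (simp add: eval2_minus)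
  then show ?thesis unfolding pf2_def by blast
qed

lemma pf2_power: "pf2 f \<Longrightarrow> pf2 (\<lambda>x w. f x w ^ n)"
proof (induction n)
  case 0 then show ?case using pf2_const[of 1] by simp
next
  case (Suc n) then show ?case using pf2_mult[of f "\<lambda>x w. f x w ^ n"] by simp
qed

lemma pf2_sum: "(\<And>i. i \<in> A \<Longrightarrow> pf2 (f i)) \<Longrightarrow> pf2 (\<lambda>x w. \<Sum>i\<in>A. f i x w)"
proof (induction A rule: infinite_finite_induct)
  case (infinite A) then show ?case using pf2_const[of 0] by simp
next
  case empty then show ?case using pf2_const[of 0] by simp
next
  case (insert x F) then show ?case using pf2_add[of "f x" "\<lambda>a w. \<Sum>i\<in>F. f i a w"] by simp
qed

lemma pf2_poly: "pf2 f \<Longrightarrow> pf2 (\<lambda>x w. poly (cp1 c) (f x w))"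
proof (induction c)
  case 0 then show ?case using pf2_const[of 0] by simp
next
  case (pCons a c)
  then have "pf2 (\<lambda>x w. of_real a + f x w * poly (cp1 c) (f x w))"
    by (intro pf2_add pf2_mult pf2_const) auto
  then show ?case by (simp add: map_poly_pCons)
qed

lemma pf2_eval2: "pf2 f \<Longrightarrow> pf2 g \<Longrightarrow> pf2 (\<lambda>x w. eval2 (cp2 G) (f x w) (g x w))"
proof (induction G)
  case 0 then show ?case using pf2_const[of 0] by (simp add: eval2_def)
next
  case (pCons a G)
  then have "pf2 (\<lambda>x w. poly (cp1 a) (f x w) + g x w * eval2 (cp2 G) (f x w) (g x w))"
    by (intro pf2_add pf2_mult pf2_poly) auto
  then show ?case by (simp add: eval2_cp2_pCons)
qed


definition hom :: "nat \<Rightarrow> real poly \<Rightarrow> complex \<Rightarrow> complex \<Rightarrow> complex" where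
  "hom N c a b = (\<Sum>i\<le>N. of_real (coeff c i) * a^i * b^(N-i))"

lemma hom_eval: assumes "degree c \<le> N"
  shows "hom N c (s*b) b = b^N * poly (cp1 c) s"
proof -
  have "poly (cp1 c) s = (\<Sum>i\<le>N. coeff (cp1 c) i * s^i)"
    by (rule poly_sum_bound) (use assms in \<open>simp add: degree_map_poly\<close>)
  then have "b^N * poly (cp1 c) s = (\<Sum>i\<le>N. of_real (coeff c i) * s^i * b^N)"
    by (simp add: sum_distrib_left coeff_map_poly mult_ac)
  also have "\<dots> = hom N c (s*b) b"
    unfolding hom_def
  proof (rule sum.cong)
    fix i assume "i \<in> {..N}"
    then have "b^N = b^i * b^(N-i)" by (simp add: power_add[symmetric])
    then show "of_real (coeff c i) * s^i * b^N = of_real (coeff c i) * (s*b)^i * b^(N-i)"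
      by (simp add: power_mult_distrib mult_ac)
  qed simp
  finally show ?thesis by simp
qed

lemma pf3_hom: "pf3 f \<Longrightarrow> pf3 g \<Longrightarrow> pf3 (\<lambda>P. hom N c (f P) (g P))"
  unfolding hom_def by (intro pf3_sum pf3_mult pf3_const pf3_power)

lemma pf2_hom: "pf2 f \<Longrightarrow> pf2 g \<Longrightarrow> pf2 (\<lambda>x w. hom N c (f x w) (g x w))"
  unfolding hom_def by (intro pf2_sum pf2_mult pf2_const pf2_power)

lemma poly_cp1_pow: "cp1 (q ^ n) = cp1 q ^ n"
  by (induction n) (simp_all add: cp1_mult)

definition qr :: "real poly \<Rightarrow> (complex \<Rightarrow> complex) \<Rightarrow> bool" where
  "qr q \<phi> \<longleftrightarrow> (\<exists>m P. \<forall>s. poly (cp1 q) s \<noteq> 0 \<longrightarrow> poly (cp1 q) s ^ m * \<phi> s = poly (cp1 P) s)"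

lemma qr_poly: "qr q (\<lambda>s. poly (cp1 c) s)"
  unfolding qr_def by (rule exI[of _ 0], rule exI[of _ c]) simp

lemma qr_frac: "qr q (\<lambda>s. poly (cp1 c) s / poly (cp1 q) s)"
  unfolding qr_def by (rule exI[of _ 1], rule exI[of _ c]) simp

lemma qr_const: "qr q (\<lambda>s. of_real c)"
  using qr_poly[of q "[:c:]"] by (simp add: map_poly_pCons)

lemma qr_add: assumes "qr q f" "qr q g" shows "qr q (\<lambda>s. f s + g s)"
proof -
  from assms obtain m1 P1 m2 P2 where
    1: "\<forall>s. poly (cp1 q) s \<noteq> 0 \<longrightarrow> poly (cp1 q) s ^ m1 * f s = poly (cp1 P1) s" and
    2: "\<forall>s. poly (cp1 q) s \<noteq> 0 \<longrightarrow> poly (cp1 q) s ^ m2 * g s = poly (cp1 P2) s"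
    unfolding qr_def by blast
  have "\<forall>s. poly (cp1 q) s \<noteq> 0 \<longrightarrow> poly (cp1 q) s ^ (m1+m2) * (f s + g s)
        = poly (cp1 (q^m2 * P1 + q^m1 * P2)) s"
  proof (intro allI impI)
    fix s assume s: "poly (cp1 q) s \<noteq> 0"
    have "poly (cp1 q) s ^ (m1+m2) * (f s + g s) =
      poly (cp1 q) s ^ m2 * (poly (cp1 q) s ^ m1 * f s) + poly (cp1 q) s ^ m1 * (poly (cp1 q) s ^ m2 * g s)"
      by (simp add: power_add algebra_simps)
    also have "\<dots> = poly (cp1 (q^m2 * P1 + q^m1 * P2)) s"
      using 1 2 s by (simp add: cp1_add cp1_mult poly_cp1_pow)
    finally show "poly (cp1 q) s ^ (m1+m2) * (f s + g s) = poly (cp1 (q^m2 * P1 + q^m1 * P2)) s" .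
  qed
  then show ?thesis unfolding qr_def by blast
qed

lemma qr_mult: assumes "qr q f" "qr q g" shows "qr q (\<lambda>s. f s * g s)"
proof -
  from assms obtain m1 P1 m2 P2 where
    1: "\<forall>s. poly (cp1 q) s \<noteq> 0 \<longrightarrow> poly (cp1 q) s ^ m1 * f s = poly (cp1 P1) s" and
    2: "\<forall>s. poly (cp1 q) s \<noteq> 0 \<longrightarrow> poly (cp1 q) s ^ m2 * g s = poly (cp1 P2) s"
    unfolding qr_def by blast
  have "\<forall>s. poly (cp1 q) s \<noteq> 0 \<longrightarrow> poly (cp1 q) s ^ (m1+m2) * (f s * g s)
        = poly (cp1 (P1 * P2)) s"
  proof (intro allI impI)
    fix s assume s: "poly (cp1 q) s \<noteq> 0"
    have "poly (cp1 q) s ^ (m1+m2) * (f s * g s) =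
      (poly (cp1 q) s ^ m1 * f s) * (poly (cp1 q) s ^ m2 * g s)"
      by (simp add: power_add algebra_simps)
    also have "\<dots> = poly (cp1 (P1 * P2)) s"
      using 1 2 s by (simp add: cp1_mult)
    finally show "poly (cp1 q) s ^ (m1+m2) * (f s * g s) = poly (cp1 (P1 * P2)) s" .
  qed
  then show ?thesis unfolding qr_def by blast
qed

lemma qr_diff: assumes "qr q f" "qr q g" shows "qr q (\<lambda>s. f s - g s)"
proof -
  have "qr q (\<lambda>s. f s + of_real (-1) * g s)" by (intro qr_add qr_mult qr_const assms)
  then show ?thesis by simp
qed

lemma qr_polycomp: "qr q f \<Longrightarrow> qr q (\<lambda>s. poly (cp1 c) (f s))"
proof (induction c)
  case 0 then show ?case using qr_const[of q 0] by simp
next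
  case (pCons a c)
  then have "qr q (\<lambda>s. of_real a + f s * poly (cp1 c) (f s))"
    by (intro qr_add qr_mult qr_const) auto
  then show ?case by (simp add: map_poly_pCons)
qed

lemma qr_eval2: "qr q f \<Longrightarrow> qr q g \<Longrightarrow> qr q (\<lambda>s. eval2 (cp2 G) (f s) (g s))"
proof (induction G)
  case 0 then show ?case using qr_const[of q 0] by (simp add: eval2_def)
next
  case (pCons a G)
  then have "qr q (\<lambda>s. poly (cp1 a) (f s) + g s * eval2 (cp2 G) (f s) (g s))"
    by (intro qr_add qr_mult qr_polycomp) auto
  then show ?case by (simp add: eval2_cp2_pCons)
qed

lemma qr_zero:
  assumes "qr q f" and inf: "infinite {t::real. poly q t \<noteq> 0 \<and> f (of_real t) = 0}"
    and s: "poly (cp1 q) s \<noteq> 0"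
  shows "f s = 0"
proof -
  from assms(1) obtain m P where mP: "\<forall>s. poly (cp1 q) s \<noteq> 0 \<longrightarrow> poly (cp1 q) s ^ m * f s = poly (cp1 P) s"
    unfolding qr_def by blast
  have "{t::real. poly q t \<noteq> 0 \<and> f (of_real t) = 0} \<subseteq> {t. poly P t = 0}"
  proof safe
    fix t assume t: "poly q t \<noteq> 0" "f (of_real t) = 0"
    have "poly (cp1 q) (of_real t) \<noteq> 0" using t by (simp add: poly_cp1_real)
    then have "poly (cp1 q) (of_real t) ^ m * f (of_real t) = poly (cp1 P) (of_real t)" using mP by blast
    then have "poly (cp1 P) (of_real t) = 0" using t(2) by simp
    then show "poly P t = 0" by (simp add: poly_cp1_real)
  qed
  then have "infinite {t. poly P t = 0}" using inf finite_subset by blast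
  then have "P = 0" using poly_roots_finite by blast
  then show ?thesis using mP s by simp
qed

lemma qr_nonzero:
  assumes "qr q f" and "poly (cp1 q) s0 \<noteq> 0" "f s0 \<noteq> 0"
  obtains R where "R \<noteq> 0" "\<And>s. poly (cp1 R) s \<noteq> 0 \<Longrightarrow> poly (cp1 q) s \<noteq> 0 \<and> f s \<noteq> 0"
proof -
  from assms(1) obtain m P where mP: "\<forall>s. poly (cp1 q) s \<noteq> 0 \<longrightarrow> poly (cp1 q) s ^ m * f s = poly (cp1 P) s"
    unfolding qr_def by blast
  have "poly (cp1 (q * P)) s0 \<noteq> 0" using assms mP by (simp add: cp1_mult) (metis mult_eq_0_iff power_not_zero)
  then have "q * P \<noteq> 0" by auto
  moreover have "poly (cp1 q) s \<noteq> 0 \<and> f s \<noteq> 0" if "poly (cp1 (q * P)) s \<noteq> 0" for s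
    using that mP by (simp add: cp1_mult) (metis mult_zero_right)
  ultimately show ?thesis using that by blast
qed



lemma infinite_nonroots_real: "P \<noteq> 0 \<Longrightarrow> infinite {t::real. poly P t \<noteq> 0}"
proof
  assume "P \<noteq> 0" "finite {t::real. poly P t \<noteq> 0}"
  moreover have "finite {t. poly P t = 0}" using \<open>P \<noteq> 0\<close> by (rule poly_roots_finite)
  ultimately have "finite ({t::real. poly P t \<noteq> 0} \<union> {t. poly P t = 0})" by simp
  moreover have "{t::real. poly P t \<noteq> 0} \<union> {t. poly P t = 0} = UNIV" by auto
  ultimately show False using infinite_UNIV_char_0 by metis
qed

lemma infinite_nonroots_complex: "P \<noteq> 0 \<Longrightarrow> infinite {t::complex. poly P t \<noteq> 0}"
proof
  assume "P \<noteq> 0" "finite {t::complex. poly P t \<noteq> 0}"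
  moreover have "finite {t. poly P t = 0}" using \<open>P \<noteq> 0\<close> by (rule poly_roots_finite)
  ultimately have "finite ({t::complex. poly P t \<noteq> 0} \<union> {t. poly P t = 0})" by simp
  moreover have "{t::complex. poly P t \<noteq> 0} \<union> {t. poly P t = 0} = UNIV" by auto
  ultimately show False using infinite_UNIV_char_0 by metis
qed

lemma cp1_nz: "c \<noteq> 0 \<Longrightarrow> cp1 c \<noteq> 0"
  by (simp add: map_poly_eq_0_iff)

locale SS =
  fixes f :: "real poly poly poly" and p q r h d :: "real poly" and A B :: "real poly poly" and t0 :: real
  assumes sor: "surface_of_revolution_x_axis f"
    and irr: "absolutely_irreducible f"
    and fact: "(r div gcd r q) * (q div gcd r q) = h * d\<^sup>2"
    and q0: "q \<noteq> 0"
    and onC: "\<And>t. poly q t \<noteq> 0 \<Longrightarrow> eval2 (profile_half f) (poly p t / poly q t) (poly r t / poly q t) = 0"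
    and t0: "poly q t0 \<noteq> 0" "eval2 B (poly p t0 / poly q t0) (poly r t0 / poly q t0) \<noteq> 0"
    and inv: "\<And>t. poly q t \<noteq> 0 \<Longrightarrow> eval2 B (poly p t / poly q t) (poly r t / poly q t) \<noteq> 0 \<Longrightarrow>
          eval2 A (poly p t / poly q t) (poly r t / poly q t) / eval2 B (poly p t / poly q t) (poly r t / poly q t) = t"
begin

definition "FC = cp2 (profile_half f)"
definition "Xs s = poly (cp1 p) s / poly (cp1 q) s"
definition "Ws s = poly (cp1 r) s / poly (cp1 q) s"
definition "Ac s = eval2 (cp2 A) (Xs s) (Ws s)"
definition "Bc s = eval2 (cp2 B) (Xs s) (Ws s)"

lemma Xs_real: "Xs (of_real t) = of_real (poly p t / poly q t)"
  by (simp add: Xs_def poly_cp1_real)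
lemma Ws_real: "Ws (of_real t) = of_real (poly r t / poly q t)"
  by (simp add: Ws_def poly_cp1_real)

lemma eval_real: "eval2 (cp2 G) (Xs (of_real t)) (Ws (of_real t)) = of_real (eval2 G (poly p t / poly q t) (poly r t / poly q t))"
  unfolding Xs_real Ws_real eval2_cp2_real ..

lemma qr_Xs: "qr q Xs" unfolding Xs_def by (rule qr_frac)
lemma qr_Ws: "qr q Ws" unfolding Ws_def by (rule qr_frac)

lemma FC_irr: "irreducible FC" unfolding FC_def by (rule irr_FC[OF sor irr])
lemma FC_deg: "degree FC > 0"
  unfolding FC_def using degree_pos[OF sor] by (subst degree_map_poly) (auto simp: map_poly_eq_0_iff)

lemma on_curve: assumes "poly (cp1 q) s \<noteq> 0" shows "eval2 FC (Xs s) (Ws s) = 0"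
proof (rule qr_zero[where f = "\<lambda>s. eval2 FC (Xs s) (Ws s)", OF _ _ assms])
  show "qr q (\<lambda>s. eval2 FC (Xs s) (Ws s))" unfolding FC_def by (intro qr_eval2 qr_Xs qr_Ws)
  have "{t. poly q t \<noteq> 0} \<subseteq> {t. poly q t \<noteq> 0 \<and> eval2 FC (Xs (of_real t)) (Ws (of_real t)) = 0}"
    using onC by (auto simp: FC_def eval_real)
  then show "infinite {t. poly q t \<noteq> 0 \<and> eval2 FC (Xs (of_real t)) (Ws (of_real t)) = 0}"
    using infinite_nonroots_real[OF q0] finite_subset by blast
qed

lemma exists_RB: "\<exists>R. R \<noteq> 0 \<and> (\<forall>s. poly (cp1 R) s \<noteq> 0 \<longrightarrow> poly (cp1 q) s \<noteq> 0 \<and> Bc s \<noteq> 0)"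
proof -
  have "qr q Bc" unfolding Bc_def by (intro qr_eval2 qr_Xs qr_Ws)
  moreover have "poly (cp1 q) (of_real t0) \<noteq> 0" using t0 by (simp add: poly_cp1_real)
  moreover have "Bc (of_real t0) \<noteq> 0" using t0 by (simp add: Bc_def eval_real)
  ultimately obtain R where "R \<noteq> 0" "\<And>s. poly (cp1 R) s \<noteq> 0 \<Longrightarrow> poly (cp1 q) s \<noteq> 0 \<and> Bc s \<noteq> 0"
    by (rule qr_nonzero) blast
  then show ?thesis by blast
qed

definition "RB = (SOME R. R \<noteq> 0 \<and> (\<forall>s. poly (cp1 R) s \<noteq> 0 \<longrightarrow> poly (cp1 q) s \<noteq> 0 \<and> Bc s \<noteq> 0))"

lemma RB: "RB \<noteq> 0" "\<And>s. poly (cp1 RB) s \<noteq> 0 \<Longrightarrow> poly (cp1 q) s \<noteq> 0 \<and> Bc s \<noteq> 0"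
  using someI_ex[OF exists_RB] unfolding RB_def by blast+

lemma AB: assumes "poly (cp1 q) s \<noteq> 0" shows "Ac s = s * Bc s"
proof -
  have "Ac s - s * Bc s = 0"
  proof (rule qr_zero[where f = "\<lambda>s. Ac s - s * Bc s", OF _ _ assms])
    have "qr q (\<lambda>s. poly (cp1 [:0,1:]) s)" by (rule qr_poly)
    then have "qr q (\<lambda>s. s)" by (simp add: map_poly_pCons)
    then show "qr q (\<lambda>s. Ac s - s * Bc s)" unfolding Ac_def Bc_def
      by (intro qr_eval2 qr_Xs qr_Ws qr_diff qr_mult)
    have "{t. poly RB t \<noteq> 0} \<subseteq> {t. poly q t \<noteq> 0 \<and> Ac (of_real t) - of_real t * Bc (of_real t) = 0}"
    proof safe
      fix t assume "poly RB t \<noteq> 0"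
      then have "poly (cp1 RB) (of_real t) \<noteq> 0" by (simp add: poly_cp1_real)
      then have *: "poly (cp1 q) (of_real t) \<noteq> 0" "Bc (of_real t) \<noteq> 0" using RB by auto
      then show qt: "poly q t = 0 \<Longrightarrow> False" by (simp add: poly_cp1_real)
      have "eval2 B (poly p t / poly q t) (poly r t / poly q t) \<noteq> 0"
        using * by (simp add: Bc_def eval_real)
      then have "eval2 A (poly p t / poly q t) (poly r t / poly q t) = t * eval2 B (poly p t / poly q t) (poly r t / poly q t)"
        using inv[of t] qt by (auto simp: field_simps)
      then show "Ac (of_real t) - of_real t * Bc (of_real t) = 0"
        by (simp add: Ac_def Bc_def eval_real)
    qed
    then show "infinite {t. poly q t \<noteq> 0 \<and> Ac (of_real t) - of_real t * Bc (of_real t) = 0}"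
      using infinite_nonroots_real[OF RB(1)] finite_subset by blast
  qed
  then show ?thesis by simp
qed

definition "Good = {s. poly (cp1 RB) s \<noteq> 0}"

lemma Good: assumes "s \<in> Good" shows "poly (cp1 q) s \<noteq> 0" "Bc s \<noteq> 0" "Ac s = s * Bc s"
  using RB(2)[of s] assms AB by (auto simp: Good_def)

lemma Good_inf: "infinite Good"
  unfolding Good_def using infinite_nonroots_complex cp1_nz RB(1) by blast

lemma curve_dvd:
  fixes G :: "complex poly poly"
  assumes "\<And>s. s \<in> Good \<Longrightarrow> eval2 G (Xs s) (Ws s) = 0"
  shows "FC dvd G"
proof -
  define S where "S = (\<lambda>s. (Xs s, Ws s)) ` Good"
  have "inj_on (\<lambda>s. (Xs s, Ws s)) Good"
  proof (rule inj_onI)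
    fix s1 s2 assume "s1 \<in> Good" "s2 \<in> Good" "(Xs s1, Ws s1) = (Xs s2, Ws s2)"
    then have "Ac s1 / Bc s1 = Ac s2 / Bc s2" by (simp add: Ac_def Bc_def)
    then show "s1 = s2" using Good \<open>s1 \<in> Good\<close> \<open>s2 \<in> Good\<close> by simp
  qed
  then have "infinite S" unfolding S_def using Good_inf finite_imageD by blast
  moreover have "\<And>a b. (a, b) \<in> S \<Longrightarrow> eval2 FC a b = 0 \<and> eval2 G a b = 0"
    unfolding S_def using assms(1) on_curve Good by auto
  ultimately show "FC dvd G" by (rule curve[OF FC_irr FC_deg])
qed

lemma curve_vanish:
  fixes G :: "complex poly poly"
  assumes "\<And>s. s \<in> Good \<Longrightarrow> eval2 G (Xs s) (Ws s) = 0"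
    and "eval2 FC x w = 0"
  shows "eval2 G x w = 0"
proof -
  have "FC dvd G" using assms(1) by (rule curve_dvd)
  then obtain K where "G = FC * K" by (auto elim: dvdE)
  then show ?thesis using assms(2) by (simp add: eval2_mult)
qed

end


context SS begin

lemma FC_nz: "FC \<noteq> 0" using FC_irr by auto

lemma evalC_f: "evalC f (x, y, z) = eval2 FC x (y^2 + z^2)"
  unfolding FC_def by (rule complex_identity[OF sor])

lemma r_nz: "r \<noteq> 0"
proof
  assume r0: "r = 0"
  have "FC dvd [:0,1:]" by (rule curve_dvd) (unfold Ws_def, simp add: r0 eval2_def)
  then obtain u where u: "[:0,1:] = FC * u" by (auto elim: dvdE)
  have u0: "u \<noteq> 0" using u by auto
  have "degree (FC * u) = 1" unfolding u[symmetric] by simp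
  then have "degree FC + degree u = 1" using degree_mult_eq[OF FC_nz u0] by simp
  then have dF: "degree FC = 1" and "degree u = 0" using FC_deg by auto
  then obtain c where c: "u = [:c:]" by (metis degree_eq_zeroE)
  have "coeff [:0,1:] 0 = coeff FC 0 * c" "coeff [:0,1:] 1 = coeff FC 1 * c"
    by (simp_all add: u c)
  then have cF0: "coeff FC 0 = 0" and c1: "coeff FC 1 * c = 1" by auto
  define c1 where "c1 = coeff FC 1"
  have c1nz: "c1 \<noteq> 0" using c1 c1_def by auto
  have evF: "eval2 FC x w = w * poly c1 x" for x w
  proof -
    have "poly FC [:w:] = (\<Sum>i\<le>1. coeff FC i * [:w:] ^ i)" using dF poly_altdef[of FC] by simp
    then show ?thesis by (simp add: eval2_def cF0 c1_def)
  qed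
  define L :: "complex poly poly poly" where "L = [:[:c1:]:] * [: [:0,1:], [:[:\<i>:]:] :]"
  define M :: "complex poly poly poly" where "M = [: [:0,1:], [:[:-\<i>:]:] :]"
  have "cpoly3 f = L * M"
  proof (rule eq3)
    fix x y z
    have "eval3 (cpoly3 f) x y z = evalC f (x, y, z)" by (simp add: evalC_def)
    also have "\<dots> = (y^2 + z^2) * poly c1 x" by (simp add: evalC_f evF)
    also have "\<dots> = eval3 (L * M) x y z"
      by (simp add: L_def M_def eval3_def algebra_simps power2_eq_square)
    finally show "eval3 (cpoly3 f) x y z = eval3 (L * M) x y z" .
  qed
  moreover have "irreducible (cpoly3 f)" using irr by (simp add: absolutely_irreducible_def)
  ultimately have "is_unit L \<or> is_unit M" by (simp add: irreducible_def)
  moreover have "degree M = 1" by (simp add: M_def)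
  moreover have "degree L = 1" unfolding L_def using c1nz by (subst degree_mult_eq) auto
  ultimately show False by (auto simp: is_unit_poly_iff)
qed

definition "gg = gcd r q"
definition "qt = q div gg"
definition "rt = r div gg"

lemma q_eq: "q = gg * qt" unfolding qt_def gg_def by simp
lemma r_eq: "r = gg * rt" unfolding rt_def gg_def by simp
lemma gg_nz: "gg \<noteq> 0" using q0 q_eq by auto
lemma qt_nz: "qt \<noteq> 0" using q0 q_eq by auto
lemma fact': "rt * qt = h * d^2" using fact unfolding rt_def qt_def gg_def .

lemma d_nz: "d \<noteq> 0"
proof
  assume "d = 0"
  then have "rt * qt = 0" using fact' by simp
  then have "rt = 0" using qt_nz by simp
  then show False using r_nz r_eq by simp
qed

lemma cq_eq: "poly (cp1 q) s = poly (cp1 gg) s * poly (cp1 qt) s"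
  by (subst q_eq) (simp add: cp1_mult)
lemma cr_eq: "poly (cp1 r) s = poly (cp1 gg) s * poly (cp1 rt) s"
  by (subst r_eq) (simp add: cp1_mult)
lemma cfact: "poly (cp1 rt) s * poly (cp1 qt) s = poly (cp1 h) s * poly (cp1 d) s ^ 2"
proof -
  have "cp1 (rt * qt) = cp1 (h * d^2)" using fact' by simp
  then have "poly (cp1 (rt * qt)) s = poly (cp1 (h * d^2)) s" by simp
  then show ?thesis by (simp only: cp1_mult poly_cp1_pow poly_mult poly_power)
qed

definition "NN = degree p + degree q + degree r + degree d + degree qt"

lemma hom_p: "hom NN p (s*b) b = b^NN * poly (cp1 p) s" by (rule hom_eval) (simp add: NN_def)
lemma hom_q: "hom NN q (s*b) b = b^NN * poly (cp1 q) s" by (rule hom_eval) (simp add: NN_def)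
lemma hom_r: "hom NN r (s*b) b = b^NN * poly (cp1 r) s" by (rule hom_eval) (simp add: NN_def)
lemma hom_d: "hom NN d (s*b) b = b^NN * poly (cp1 d) s" by (rule hom_eval) (simp add: NN_def)
lemma hom_qt: "hom NN qt (s*b) b = b^NN * poly (cp1 qt) s" by (rule hom_eval) (simp add: NN_def)

definition "a2 x w = eval2 (cp2 A) x w"
definition "b2 x w = eval2 (cp2 B) x w"

lemma pf2_a2: "pf2 a2" unfolding a2_def by (intro pf2_eval2 pf2_x pf2_w)
lemma pf2_b2: "pf2 b2" unfolding b2_def by (intro pf2_eval2 pf2_x pf2_w)

lemma a2_good: "s \<in> Good \<Longrightarrow> a2 (Xs s) (Ws s) = s * b2 (Xs s) (Ws s)"
  using Good(3) by (simp add: a2_def b2_def Ac_def Bc_def)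
lemma b2_good: "s \<in> Good \<Longrightarrow> b2 (Xs s) (Ws s) \<noteq> 0"
  using Good(2) by (simp add: b2_def Bc_def)

lemma G1: assumes "eval2 FC x w = 0"
  shows "x * hom NN q (a2 x w) (b2 x w) = hom NN p (a2 x w) (b2 x w)"
proof -
  have "pf2 (\<lambda>x w. x * hom NN q (a2 x w) (b2 x w) - hom NN p (a2 x w) (b2 x w))"
    by (intro pf2_diff pf2_mult pf2_x pf2_hom pf2_a2 pf2_b2)
  then obtain G where G: "\<And>x w. x * hom NN q (a2 x w) (b2 x w) - hom NN p (a2 x w) (b2 x w) = eval2 G x w"
    unfolding pf2_def by blast
  have "eval2 G x w = 0"
  proof (rule curve_vanish[OF _ assms])
    fix s assume s: "s \<in> Good"
    show "eval2 G (Xs s) (Ws s) = 0"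
      unfolding G[symmetric] a2_good[OF s] hom_p hom_q
      using Good(1)[OF s] by (simp add: Xs_def)
  qed
  then have "x * hom NN q (a2 x w) (b2 x w) - hom NN p (a2 x w) (b2 x w) = 0" by (simp only: G)
  then show ?thesis by simp
qed

lemma G2: assumes "eval2 FC x w = 0"
  shows "w * hom NN q (a2 x w) (b2 x w) = hom NN r (a2 x w) (b2 x w)"
proof -
  have "pf2 (\<lambda>x w. w * hom NN q (a2 x w) (b2 x w) - hom NN r (a2 x w) (b2 x w))"
    by (intro pf2_diff pf2_mult pf2_w pf2_hom pf2_a2 pf2_b2)
  then obtain G where G: "\<And>x w. w * hom NN q (a2 x w) (b2 x w) - hom NN r (a2 x w) (b2 x w) = eval2 G x w"
    unfolding pf2_def by blast
  have "eval2 G x w = 0"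
  proof (rule curve_vanish[OF _ assms])
    fix s assume s: "s \<in> Good"
    show "eval2 G (Xs s) (Ws s) = 0"
      unfolding G[symmetric] a2_good[OF s] hom_r hom_q
      using Good(1)[OF s] by (simp add: Ws_def)
  qed
  then have "w * hom NN q (a2 x w) (b2 x w) - hom NN r (a2 x w) (b2 x w) = 0" by (simp only: G)
  then show ?thesis by simp
qed

end


context SS begin

definition "tau = (\<lambda>(x, y, z).
              let g = map_poly complex_of_real (gcd r q);
                  pt = poly (map_poly complex_of_real p) x / poly g x;
                  qt = poly (map_poly complex_of_real (q div gcd r q)) x;
                  dx = poly (map_poly complex_of_real d) x
              in (pt / qt, dx * y / qt, dx * z / qt))"

lemma tau_eq: "tau (x, y, z) = (poly (cp1 p) x / poly (cp1 gg) x / poly (cp1 qt) x,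
   poly (cp1 d) x * y / poly (cp1 qt) x, poly (cp1 d) x * z / poly (cp1 qt) x)"
  by (simp add: tau_def gg_def qt_def Let_def)

definition "tauR = (\<lambda>(x, y, z). (poly (cp1 p) x / poly (cp1 q) x,
   poly (cp1 d) x * y * poly (cp1 gg) x / poly (cp1 q) x, poly (cp1 d) x * z * poly (cp1 gg) x / poly (cp1 q) x))"

lemma tau_tauR: assumes "poly (cp1 q) x \<noteq> 0" shows "tau (x, y, z) = tauR (x, y, z)"
proof -
  have "poly (cp1 gg) x \<noteq> 0" "poly (cp1 qt) x \<noteq> 0" using assms cq_eq by auto
  then show ?thesis using assms by (simp add: tau_eq tauR_def cq_eq field_simps)
qed

definition "a3 P = a2 (fst P) (fst (snd P)^2 + snd (snd P)^2)"
definition "b3 P = b2 (fst P) (fst (snd P)^2 + snd (snd P)^2)"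
definition "Hd3 P = hom NN d (a3 P) (b3 P)"
definition "Hq3 P = hom NN q (a3 P) (b3 P)"
definition "Ht3 P = hom NN qt (a3 P) (b3 P)"

definition "psi Q = (a3 Q * Hd3 Q / (b3 Q * Hd3 Q),
   fst (snd Q) * Ht3 Q * b3 Q / (b3 Q * Hd3 Q), snd (snd Q) * Ht3 Q * b3 Q / (b3 Q * Hd3 Q))"

definition "Dfun P = poly (cp1 (q * d * RB)) (fst P)"
definition "Efun Q = b3 Q * Hd3 Q * Hq3 Q"

lemma T1:
  assumes P: "(x, y, z) \<in> tube h" and D: "Dfun (x, y, z) \<noteq> 0"
  shows "poly (cp1 q) x \<noteq> 0" "tau (x, y, z) \<in> zero_set f"
    "b3 (tau (x, y, z)) * Hd3 (tau (x, y, z)) \<noteq> 0" "psi (tau (x, y, z)) = (x, y, z)"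
proof -
  have H: "y^2 + z^2 = poly (cp1 h) x" using P by (simp add: tube_def)
  have D': "poly (cp1 q) x * poly (cp1 d) x * poly (cp1 RB) x \<noteq> 0"
    using D by (simp add: Dfun_def cp1_mult)
  then show qx: "poly (cp1 q) x \<noteq> 0" by simp
  have dx: "poly (cp1 d) x \<noteq> 0" using D' by simp
  have good: "x \<in> Good" using D' by (simp add: Good_def)
  have gx: "poly (cp1 gg) x \<noteq> 0" and tx: "poly (cp1 qt) x \<noteq> 0" using qx cq_eq by auto
  define Y where "Y = poly (cp1 d) x * y / poly (cp1 qt) x"
  define Z where "Z = poly (cp1 d) x * z / poly (cp1 qt) x"
  have tauP: "tau (x, y, z) = (Xs x, Y, Z)"
    by (simp add: tau_eq Y_def Z_def Xs_def cq_eq)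
  have W: "Y^2 + Z^2 = Ws x"
  proof -
    have "Y^2 + Z^2 = poly (cp1 d) x ^ 2 * (y^2+z^2) / poly (cp1 qt) x ^ 2"
      by (simp add: Y_def Z_def power_divide power_mult_distrib add_divide_distrib algebra_simps)
    also have "\<dots> = poly (cp1 d) x ^ 2 * poly (cp1 h) x / poly (cp1 qt) x ^ 2" by (simp only: H)
    also have "\<dots> = poly (cp1 rt) x / poly (cp1 qt) x"
      using cfact[of x] tx by (simp add: field_simps power2_eq_square)
    also have "\<dots> = Ws x" using gx by (simp add: Ws_def cq_eq cr_eq)
    finally show ?thesis .
  qed
  show "tau (x, y, z) \<in> zero_set f"
    using on_curve[OF qx] by (simp add: zero_set_def tauP evalC_f W)
  have a: "a3 (tau (x, y, z)) = x * b2 (Xs x) (Ws x)" and b: "b3 (tau (x, y, z)) = b2 (Xs x) (Ws x)"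
    using a2_good[OF good] by (simp_all add: tauP a3_def b3_def W)
  have b0: "b2 (Xs x) (Ws x) \<noteq> 0" using b2_good[OF good] .
  have hd: "Hd3 (tau (x, y, z)) = b2 (Xs x) (Ws x) ^ NN * poly (cp1 d) x"
    by (simp add: Hd3_def a b hom_d)
  have ht: "Ht3 (tau (x, y, z)) = b2 (Xs x) (Ws x) ^ NN * poly (cp1 qt) x"
    by (simp add: Ht3_def a b hom_qt)
  show "b3 (tau (x, y, z)) * Hd3 (tau (x, y, z)) \<noteq> 0" using b0 dx by (simp add: b hd)
  show "psi (tau (x, y, z)) = (x, y, z)"
    unfolding psi_def using b0 dx tx
    by (simp add: a b hd ht) (simp add: tauP Y_def Z_def field_simps)
qed

lemma T2:
  assumes Q: "(X, Y, Z) \<in> zero_set f" and E: "Efun (X, Y, Z) \<noteq> 0"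
  shows "b3 (X, Y, Z) * Hd3 (X, Y, Z) \<noteq> 0" "psi (X, Y, Z) \<in> tube h"
    "poly (cp1 q) (fst (psi (X, Y, Z))) \<noteq> 0" "tau (psi (X, Y, Z)) = (X, Y, Z)"
proof -
  define W where "W = Y^2 + Z^2"
  have F0: "eval2 FC X W = 0" using Q by (simp add: zero_set_def evalC_f W_def)
  define a where "a = a2 X W"
  define b where "b = b2 X W"
  have a3: "a3 (X, Y, Z) = a" and b3: "b3 (X, Y, Z) = b" by (simp_all add: a3_def b3_def a_def b_def W_def)
  define t where "t = a / b"
  have E': "b * hom NN d a b * hom NN q a b \<noteq> 0" using E by (simp add: Efun_def Hd3_def Hq3_def a3 b3)
  then have b0: "b \<noteq> 0" by simp
  have at: "a = t * b" using b0 by (simp add: t_def)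
  have hd: "hom NN d a b = b^NN * poly (cp1 d) t" using hom_d[of t b] at by simp
  have hq: "hom NN q a b = b^NN * poly (cp1 q) t" using hom_q[of t b] at by simp
  have hp: "hom NN p a b = b^NN * poly (cp1 p) t" using hom_p[of t b] at by simp
  have hr: "hom NN r a b = b^NN * poly (cp1 r) t" using hom_r[of t b] at by simp
  have ht: "hom NN qt a b = b^NN * poly (cp1 qt) t" using hom_qt[of t b] at by simp
  have dt: "poly (cp1 d) t \<noteq> 0" and qt0: "poly (cp1 q) t \<noteq> 0" using E' by (simp_all add: hd hq)
  have gt: "poly (cp1 gg) t \<noteq> 0" and tt: "poly (cp1 qt) t \<noteq> 0" using qt0 cq_eq by auto
  have bN: "b^NN \<noteq> 0" using b0 by simp
  have "X * (b^NN * poly (cp1 q) t) = b^NN * poly (cp1 p) t"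
    using G1[OF F0] by (simp add: hq hp flip: a_def b_def)
  then have X: "X = poly (cp1 p) t / poly (cp1 q) t" using bN qt0 b0 by (simp add: field_simps)
  have "W * (b^NN * poly (cp1 q) t) = b^NN * poly (cp1 r) t"
    using G2[OF F0] by (simp add: hq hr flip: a_def b_def)
  then have Wt: "W = poly (cp1 rt) t / poly (cp1 qt) t" using bN qt0 gt b0 by (simp add: field_simps cq_eq cr_eq)
  have psi: "psi (X, Y, Z) = (t, Y * poly (cp1 qt) t / poly (cp1 d) t, Z * poly (cp1 qt) t / poly (cp1 d) t)"
    unfolding psi_def Hd3_def Ht3_def a3 b3 hd ht using b0 bN dt by (simp add: t_def field_simps)
  show "b3 (X, Y, Z) * Hd3 (X, Y, Z) \<noteq> 0" using b0 bN dt by (simp add: Hd3_def a3 b3 hd)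
  show "poly (cp1 q) (fst (psi (X, Y, Z))) \<noteq> 0" using qt0 by (simp add: psi)
  have "(Y * poly (cp1 qt) t / poly (cp1 d) t)^2 + (Z * poly (cp1 qt) t / poly (cp1 d) t)^2
      = W * poly (cp1 qt) t ^ 2 / poly (cp1 d) t ^ 2"
    by (simp add: W_def power_divide power_mult_distrib algebra_simps add_divide_distrib)
  also have "\<dots> = poly (cp1 rt) t * poly (cp1 qt) t / poly (cp1 d) t ^ 2"
    using tt by (simp add: Wt power2_eq_square)
  also have "\<dots> = poly (cp1 h) t" using dt by (simp add: cfact)
  finally show "psi (X, Y, Z) \<in> tube h" by (simp add: tube_def psi)
  show "tau (psi (X, Y, Z)) = (X, Y, Z)"
    unfolding psi tau_eq using dt tt gt by (simp add: X cq_eq)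
qed

end


context SS begin

lemma exT: "\<exists>P\<in>tube h. Dfun P \<noteq> 0"
proof -
  have "q * d * RB \<noteq> 0" using q0 d_nz RB(1) by simp
  then have "infinite {s. poly (cp1 (q * d * RB)) s \<noteq> 0}"
    by (intro infinite_nonroots_complex cp1_nz)
  then obtain s where s: "poly (cp1 (q * d * RB)) s \<noteq> 0" by (metis (mono_tags, lifting) empty_Collect_eq finite.emptyI)
  have "(s, csqrt (poly (cp1 h) s), 0) \<in> tube h" by (simp add: tube_def)
  moreover have "Dfun (s, csqrt (poly (cp1 h) s), 0) \<noteq> 0" using s by (simp add: Dfun_def)
  ultimately show ?thesis by blast
qed

lemma exQ: "\<exists>Q\<in>zero_set f. Efun Q \<noteq> 0"
proof -
  have "RB * d \<noteq> 0" using d_nz RB(1) by simp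
  then have "infinite {s. poly (cp1 (RB * d)) s \<noteq> 0}"
    by (intro infinite_nonroots_complex cp1_nz)
  then obtain s where s: "poly (cp1 (RB * d)) s \<noteq> 0" by (metis (mono_tags, lifting) empty_Collect_eq finite.emptyI)
  then have good: "s \<in> Good" and ds: "poly (cp1 d) s \<noteq> 0" by (simp_all add: Good_def cp1_mult)
  define Q where "Q = (Xs s, csqrt (Ws s), 0::complex)"
  have "Q \<in> zero_set f" using on_curve[OF Good(1)[OF good]] by (simp add: Q_def zero_set_def evalC_f)
  moreover have "Efun Q \<noteq> 0"
  proof -
    have a: "a3 Q = s * b2 (Xs s) (Ws s)" and b: "b3 Q = b2 (Xs s) (Ws s)"
      using a2_good[OF good] by (simp_all add: Q_def a3_def b3_def)
    have b0: "b2 (Xs s) (Ws s) \<noteq> 0" using b2_good[OF good] .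
    show ?thesis using b0 ds Good(1)[OF good]
      by (simp add: Efun_def Hd3_def Hq3_def a b hom_d hom_q)
  qed
  ultimately show ?thesis by blast
qed

lemma pf3_a3: "pf3 a3" unfolding a3_def a2_def
  by (intro pf3_eval2 pf3_x pf3_add pf3_power pf3_y pf3_z)
lemma pf3_b3: "pf3 b3" unfolding b3_def b2_def
  by (intro pf3_eval2 pf3_x pf3_add pf3_power pf3_y pf3_z)
lemma pf3_Hd3: "pf3 Hd3" unfolding Hd3_def by (intro pf3_hom pf3_a3 pf3_b3)
lemma pf3_Hq3: "pf3 Hq3" unfolding Hq3_def by (intro pf3_hom pf3_a3 pf3_b3)
lemma pf3_Ht3: "pf3 Ht3" unfolding Ht3_def by (intro pf3_hom pf3_a3 pf3_b3)

lemma get_poly: "pf3 \<phi> \<Longrightarrow> \<exists>N. \<forall>P. evalC N P = \<phi> P" unfolding pf3_def by metis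

lemma main: "birationally_equivalent (zero_set f) (tube h) \<and>
         birational_map (tube h) (zero_set f)
           (\<lambda>(x, y, z).
              let g = map_poly complex_of_real (gcd r q);
                  pt = poly (map_poly complex_of_real p) x / poly g x;
                  qt = poly (map_poly complex_of_real (q div gcd r q)) x;
                  dx = poly (map_poly complex_of_real d) x
              in (pt / qt, dx * y / qt, dx * z / qt))"
proof -
  have "pf3 (\<lambda>P. poly (cp1 p) (fst P))" by (intro pf3_poly pf3_x)
  then obtain T1 where T1: "\<forall>P. evalC T1 P = poly (cp1 p) (fst P)"
    using get_poly by blast
  have "pf3 (\<lambda>P. poly (cp1 d) (fst P) * fst (snd P) * poly (cp1 gg) (fst P))" by (intro pf3_poly pf3_x pf3_mult pf3_y)
  then obtain T2 where T2: "\<forall>P. evalC T2 P = poly (cp1 d) (fst P) * fst (snd P) * poly (cp1 gg) (fst P)"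
    using get_poly by blast
  have "pf3 (\<lambda>P. poly (cp1 d) (fst P) * snd (snd P) * poly (cp1 gg) (fst P))" by (intro pf3_poly pf3_x pf3_mult pf3_z)
  then obtain T3 where T3: "\<forall>P. evalC T3 P = poly (cp1 d) (fst P) * snd (snd P) * poly (cp1 gg) (fst P)"
    using get_poly by blast
  have "pf3 (\<lambda>P. poly (cp1 q) (fst P))" by (intro pf3_poly pf3_x)
  then obtain T4 where T4: "\<forall>P. evalC T4 P = poly (cp1 q) (fst P)"
    using get_poly by blast
  have "pf3 (\<lambda>P. a3 P * Hd3 P)" by (intro pf3_mult pf3_a3 pf3_Hd3)
  then obtain S1 where S1: "\<forall>P. evalC S1 P = a3 P * Hd3 P"
    using get_poly by blast
  have "pf3 (\<lambda>P. fst (snd P) * Ht3 P * b3 P)" by (intro pf3_mult pf3_y pf3_Ht3 pf3_b3)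
  then obtain S2 where S2: "\<forall>P. evalC S2 P = fst (snd P) * Ht3 P * b3 P"
    using get_poly by blast
  have "pf3 (\<lambda>P. snd (snd P) * Ht3 P * b3 P)" by (intro pf3_mult pf3_z pf3_Ht3 pf3_b3)
  then obtain S3 where S3: "\<forall>P. evalC S3 P = snd (snd P) * Ht3 P * b3 P"
    using get_poly by blast
  have "pf3 (\<lambda>P. b3 P * Hd3 P)" by (intro pf3_mult pf3_b3 pf3_Hd3)
  then obtain S4 where S4: "\<forall>P. evalC S4 P = b3 P * Hd3 P"
    using get_poly by blast
  have "pf3 (\<lambda>P. Dfun P)" unfolding Dfun_def by (intro pf3_poly pf3_x)
  then obtain ND where ND: "\<forall>P. evalC ND P = Dfun P"
    using get_poly by blast
  have "pf3 (\<lambda>P. Efun P)" unfolding Efun_def by (intro pf3_mult pf3_b3 pf3_Hd3 pf3_Hq3)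
  then obtain NE where NE: "\<forall>P. evalC NE P = Efun P"
    using get_poly by blast
  define Rt :: ratmap3 where "Rt = (T1, T2, T3, T4)"
  define Rp :: ratmap3 where "Rp = (S1, S2, S3, S4)"
  have Rt_def': "rm_defined Rt P \<longleftrightarrow> poly (cp1 q) (fst P) \<noteq> 0" for P
    by (simp add: Rt_def rm_defined_def T4)
  have Rt_eval: "rm_eval Rt (x, y, z) = tauR (x, y, z)" for x y z
    by (simp add: Rt_def rm_eval_def T1 T2 T3 T4 tauR_def)
  have Rp_def': "rm_defined Rp P \<longleftrightarrow> b3 P * Hd3 P \<noteq> 0" for P
    by (simp add: Rp_def rm_defined_def S4)
  have Rp_eval: "rm_eval Rp P = psi P" for P
    by (simp add: Rp_def rm_eval_def S1 S2 S3 S4 psi_def)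
  have tR: "tau P = rm_eval Rt P" if "rm_defined Rt P" for P
    using that by (cases P) (simp add: Rt_def' Rt_eval tau_tauR)
  have A1: "rm_defined Rt P \<and> tau P = rm_eval Rt P \<and> tau P \<in> zero_set f \<and>
            rm_defined Rp (tau P) \<and> rm_eval Rp (tau P) = P"
    if "P \<in> tube h" "evalC ND P \<noteq> 0" for P
  proof -
    obtain x y z where P: "P = (x, y, z)" by (cases P)
    have "(x, y, z) \<in> tube h" "Dfun (x, y, z) \<noteq> 0" using that ND P by auto
    note t = SS.T1[OF SS_axioms this]
    show ?thesis using t tR by (simp add: P Rt_def' Rp_def' Rp_eval)
  qed
  have A2: "rm_defined Rp Q \<and> rm_eval Rp Q \<in> tube h \<and>
            rm_defined Rt (rm_eval Rp Q) \<and> tau (rm_eval Rp Q) = Q"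
    if "Q \<in> zero_set f" "evalC NE Q \<noteq> 0" for Q
  proof -
    obtain x y z where Q: "Q = (x, y, z)" by (cases Q)
    have "(x, y, z) \<in> zero_set f" "Efun (x, y, z) \<noteq> 0" using that NE Q by auto
    note t = SS.T2[OF SS_axioms this]
    show ?thesis using t by (simp add: Q Rt_def' Rp_def' Rp_eval)
  qed
  have E1: "\<exists>P\<in>tube h. evalC ND P \<noteq> 0" using exT ND by metis
  have E2: "\<exists>Q\<in>zero_set f. evalC NE Q \<noteq> 0" using exQ NE by metis
  have bm1: "birational_map (tube h) (zero_set f) tau"
    unfolding birational_map_def
    by (rule exI[of _ Rt], rule exI[of _ Rp], rule exI[of _ ND], rule exI[of _ NE])
       (use E1 E2 A1 A2 in blast)
  have bm2: "birational_map (zero_set f) (tube h) (rm_eval Rp)"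
    unfolding birational_map_def
  proof (rule exI[of _ Rp], rule exI[of _ Rt], rule exI[of _ NE], rule exI[of _ ND], intro conjI)
    show "\<exists>P\<in>zero_set f. evalC NE P \<noteq> 0" by (rule E2)
    show "\<exists>Q\<in>tube h. evalC ND Q \<noteq> 0" by (rule E1)
    show "\<forall>P\<in>zero_set f. evalC NE P \<noteq> 0 \<longrightarrow> rm_defined Rp P \<and> rm_eval Rp P = rm_eval Rp P \<and>
        rm_eval Rp P \<in> tube h \<and> rm_defined Rt (rm_eval Rp P) \<and> rm_eval Rt (rm_eval Rp P) = P"
      using A2 tR by metis
    show "\<forall>Q\<in>tube h. evalC ND Q \<noteq> 0 \<longrightarrow> rm_defined Rt Q \<and> rm_eval Rt Q \<in> zero_set f \<and>
        rm_defined Rp (rm_eval Rt Q) \<and> rm_eval Rp (rm_eval Rt Q) = Q"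
      using A1 by metis
  qed
  show ?thesis using bm1 bm2 unfolding birationally_equivalent_def tau_def by blast
qed

end

theorem theorem3:
  fixes f :: "real poly poly poly" and p q r h d :: "real poly"
  assumes sor: "surface_of_revolution_x_axis f"
    and irr: "absolutely_irreducible f"
    and param: "proper_parametrization (profile_half f) p q r"
    and fact: "(r div gcd r q) * (q div gcd r q) = h * d\<^sup>2"
    and sqf: "squarefree h"
  shows "birationally_equivalent (zero_set f) (tube h) \<and>
         birational_map (tube h) (zero_set f)
           (\<lambda>(x, y, z).
              let g = map_poly complex_of_real (gcd r q);
                  pt = poly (map_poly complex_of_real p) x / poly g x;
                  qt = poly (map_poly complex_of_real (q div gcd r q)) x;
                  dx = poly (map_poly complex_of_real d) x
              in (pt / qt, dx * y / qt, dx * z / qt))"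
proof -
  from param have q0: "q \<noteq> 0"
    and onC: "\<forall>t. poly q t \<noteq> 0 \<longrightarrow> eval2 (profile_half f) (poly p t / poly q t) (poly r t / poly q t) = 0"
    unfolding proper_parametrization_def by blast+
  from param obtain A B :: "real poly poly" where
    ex: "\<exists>t. poly q t \<noteq> 0 \<and> eval2 B (poly p t / poly q t) (poly r t / poly q t) \<noteq> 0" and
    inv: "\<forall>t. poly q t \<noteq> 0 \<and> eval2 B (poly p t / poly q t) (poly r t / poly q t) \<noteq> 0 \<longrightarrow>
             eval2 A (poly p t / poly q t) (poly r t / poly q t) /
             eval2 B (poly p t / poly q t) (poly r t / poly q t) = t"
    unfolding proper_parametrization_def by blast
  from ex obtain t0 where t0: "poly q t0 \<noteq> 0" "eval2 B (poly p t0 / poly q t0) (poly r t0 / poly q t0) \<noteq> 0"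
    by blast
  interpret SS f p q r h d A B t0
    by unfold_locales (use sor irr fact q0 onC t0 inv in auto)
  show ?thesis by (rule main)
qed

end
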